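(* Let $k$ be a positive integer. For all positive integers $m,n$, $R_k^m\cong R_k^n$ if and only if $m\equiv n\pmod k$.
   Context: $\mathbb{N}=\{1,2,3,\dots\}$. $R$ denotes the ring of all $\mathbb{N}\times\mathbb{N}$ integer matrices with only finitely many nonzero entries in each row and each column, with entrywise addition and multiplication $(AB)_{i,j}=\sum_{l\ge1}a_{i,l}b_{l,j}$. Fix a positive integer $k$. Partition $\mathbb{N}$ into consecutive blocks $J_1=\{1\}$ and, for $m\ge2$, $J_m=\{2+k(m-2),\dots,1+k(m-1)\}$. For $A\in R$, the block $A^{m,n}$ is the submatrix with rows indexed by $J_m$ and columns by $J_n$. $R_k$ is the subring of $A\in R$ such that for all but finitely many pairs $(m,n)$ with $m,n\ge2$, $A^{m,n}=cI_k$ for some integer $c$. For a ring $S$, $S^n$ is the free left $S$-module of $n$-tuples with componentwise operations; $S^m\cong S^n$ means there is a bijective left-$S$-linear map $S^m\to S^n$, equivalently there exist $X\in M_{m\times n}(S)$, $Y\in M_{n\times m}(S)$ with $XY=I_m$, $YX=I_n$. *)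

theory Defs
  imports Main
begin

text \<open>Integer N x N matrices are modelled as functions nat => nat => int, using the
  positive indices 1,2,3,...; entries with a zero index are required to vanish,
  so that equality of ring elements is equality of functions.\<close>

type_synonym imat = "nat \<Rightarrow> nat \<Rightarrow> int"

definition inR :: "imat \<Rightarrow> bool" where
  "inR A \<longleftrightarrow> (\<forall>i j. (i = 0 \<or> j = 0) \<longrightarrow> A i j = 0)
      \<and> (\<forall>i. finite {j. A i j \<noteq> 0}) \<and> (\<forall>j. finite {i. A i j \<noteq> 0})"

definition mmul :: "imat \<Rightarrow> imat \<Rightarrow> imat" where
  "mmul A B = (\<lambda>i j. \<Sum>l\<in>{l. 1 \<le> l \<and> A i l \<noteq> 0}. A i l * B l j)"

definition mone :: imat where
  "mone = (\<lambda>i j. if i = j \<and> 1 \<le> i then 1 else 0)"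

definition mzero :: imat where
  "mzero = (\<lambda>i j. 0)"

text \<open>The block A^{m,n} (m,n >= 2) equals c I_k: rows J_m = {2+k(m-2)+a | a<k},
  columns J_n = {2+k(n-2)+b | b<k}.\<close>
definition block_scalar :: "nat \<Rightarrow> imat \<Rightarrow> nat \<Rightarrow> nat \<Rightarrow> bool" where
  "block_scalar k A m n \<longleftrightarrow> (\<exists>c::int. \<forall>a<k. \<forall>b<k.
      A (2 + k * (m - 2) + a) (2 + k * (n - 2) + b) = (if a = b then c else 0))"

definition inRk :: "nat \<Rightarrow> imat \<Rightarrow> bool" where
  "inRk k A \<longleftrightarrow> inR A \<and>
     finite {(m, n). 2 \<le> m \<and> 2 \<le> n \<and> \<not> block_scalar k A m n}"

text \<open>R_k^m is isomorphic to R_k^n as left R_k-modules: there are X in M_{m x n}(R_k),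
  Y in M_{n x m}(R_k) with XY = I_m and YX = I_n (matrix indices 0-based here).\<close>
definition free_iso :: "nat \<Rightarrow> nat \<Rightarrow> nat \<Rightarrow> bool" where
  "free_iso k m n \<longleftrightarrow> (\<exists>X Y :: nat \<Rightarrow> nat \<Rightarrow> imat.
      (\<forall>i<m. \<forall>j<n. inRk k (X i j)) \<and> (\<forall>i<n. \<forall>j<m. inRk k (Y i j)) \<and>
      (\<forall>i<m. \<forall>j<m. (\<lambda>a b. \<Sum>l<n. mmul (X i l) (Y l j) a b) = (if i = j then mone else mzero)) \<and>
      (\<forall>i<n. \<forall>j<n. (\<lambda>a b. \<Sum>l<m. mmul (Y i l) (X l j) a b) = (if i = j then mone else mzero)))"

end

theory Submission
  imports Defs
begin

definition pm :: "(nat\<times>nat \<Rightarrow> nat\<times>nat) \<Rightarrow> nat \<Rightarrow> nat \<Rightarrow> imat" where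
  "pm g i l = (\<lambda>a b. if 1 \<le> a \<and> 1 \<le> b \<and> g (i,a) = (l,b) then 1 else 0)"

definition blocky :: "nat \<Rightarrow> (nat\<times>nat \<Rightarrow> nat\<times>nat) \<Rightarrow> nat \<Rightarrow> bool" where
  "blocky k g i \<longleftrightarrow> (\<forall>p\<ge>2. (\<forall>s<k. snd (g (i, 2+k*(p-2)+s)) = 1) \<or>
     (\<exists>L Q. 2 \<le> Q \<and> (\<forall>s<k. g (i, 2+k*(p-2)+s) = (L, 2+k*(Q-2)+s))))"

lemma divmod_uniq:
  fixes k x y s s' :: nat
  assumes "s < k" "s' < k" "k*x+s = k*y+s'"
  shows "x = y \<and> s = s'"
proof -
  have k: "0 < k" using assms by simp
  have 1: "(k*x+s) div k = x" using assms(1) k by simp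
  have 2: "(k*x+s) mod k = s" using assms(1) by simp
  have 3: "(k*y+s') div k = y" using assms(2) k by simp
  have 4: "(k*y+s') mod k = s'" using assms(2) by simp
  show ?thesis using 1 2 3 4 assms(3) by metis
qed

lemma pm_inRk:
  assumes bl: "blocky k g i" and cf: "\<forall>b. finite {a. 1 \<le> a \<and> g (i,a) = (l,b)}"
  shows "inRk k (pm g i l)"
proof -
  have r: "finite {j. pm g i l a j \<noteq> 0}" for a
    by (rule finite_subset[of _ "{snd (g (i,a))}"]) (auto simp: pm_def split: if_splits)
  have c: "finite {a. pm g i l a j \<noteq> 0}" for j
    by (rule finite_subset[OF _ cf[rule_format, of j]]) (auto simp: pm_def split: if_splits)
  have inR: "inR (pm g i l)" unfolding inR_def using r c by (auto simp: pm_def)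
  have bs: "block_scalar k (pm g i l) p q" if "2 \<le> p" "2 \<le> q" for p q
  proof -
    from bl that(1) have "(\<forall>s<k. snd (g (i, 2+k*(p-2)+s)) = 1) \<or>
     (\<exists>L Q. 2 \<le> Q \<and> (\<forall>s<k. g (i, 2+k*(p-2)+s) = (L, 2+k*(Q-2)+s)))"
      unfolding blocky_def by blast
    then show ?thesis
    proof
      assume h: "\<forall>s<k. snd (g (i, 2+k*(p-2)+s)) = 1"
      show ?thesis unfolding block_scalar_def
      proof (intro exI[of _ 0] allI impI)
        fix a b assume "a < k" "b < k"
        then have "snd (g (i, 2+k*(p-2)+a)) = 1" using h by auto
        then show "pm g i l (2 + k * (p - 2) + a) (2 + k * (q - 2) + b) = (if a = b then 0 else 0)"
          unfolding pm_def by (metis add_leE not_one_le_zero one_add_one one_le_numeral snd_conv add_le_same_cancel1 le_add1)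
      qed
    next
      assume "\<exists>L Q. 2 \<le> Q \<and> (\<forall>s<k. g (i, 2+k*(p-2)+s) = (L, 2+k*(Q-2)+s))"
      then obtain L Q where Q: "2 \<le> Q" and h: "\<forall>s<k. g (i, 2+k*(p-2)+s) = (L, 2+k*(Q-2)+s)" by blast
      show ?thesis unfolding block_scalar_def
      proof (intro exI[of _ "if L = l \<and> Q = q then 1 else 0"] allI impI)
        fix a b assume ab: "a < k" "b < k"
        have e: "(k*(Q-2)+a = k*(q-2)+b) \<longleftrightarrow> (Q = q \<and> a = b)"
        proof
          assume "k*(Q-2)+a = k*(q-2)+b"
          from divmod_uniq[OF ab this] show "Q = q \<and> a = b" using Q that(2) by auto
        qed auto
        show "pm g i l (2 + k * (p - 2) + a) (2 + k * (q - 2) + b) = (if a = b then (if L = l \<and> Q = q then 1 else 0) else 0)"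
          unfolding pm_def using h ab e by auto
      qed
    qed
  qed
  have e: "{(m, n). 2 \<le> m \<and> 2 \<le> n \<and> \<not> block_scalar k (pm g i l) m n} = {}" using bs by auto
  show ?thesis unfolding inRk_def e using inR by simp
qed

lemma pm_mmul:
  "mmul (pm g i l) B a b = (if 1 \<le> a \<and> fst (g(i,a)) = l \<and> 1 \<le> snd (g(i,a)) then B (snd (g(i,a))) b else 0)"
proof -
  have S: "{c. 1 \<le> c \<and> pm g i l a c \<noteq> 0} = (if 1 \<le> a \<and> fst (g(i,a)) = l \<and> 1 \<le> snd (g(i,a)) then {snd (g(i,a))} else {})"
    by (auto simp: pm_def prod_eq_iff)
  show ?thesis unfolding mmul_def S by (auto simp: pm_def prod_eq_iff)
qed

lemma perm_iso:
  assumes G: "\<forall>i<m. \<forall>a\<ge>1. fst (g(i,a)) < n \<and> 1 \<le> snd (g(i,a)) \<and> h (g(i,a)) = (i,a)"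
    and H: "\<forall>l<n. \<forall>b\<ge>1. fst (h(l,b)) < m \<and> 1 \<le> snd (h(l,b)) \<and> g (h(l,b)) = (l,b)"
    and BG: "\<forall>i<m. blocky k g i" and BH: "\<forall>l<n. blocky k h l"
  shows "free_iso k m n"
  unfolding free_iso_def
proof (rule exI[of _ "pm g"], rule exI[of _ "pm h"], intro conjI allI impI)
  fix i j assume i: "i < m" and j: "j < n"
  have "finite {a. 1 \<le> a \<and> g (i,a) = (j,b)}" for b
  proof (rule finite_subset[of _ "{snd (h(j,b))}"])
    show "{a. 1 \<le> a \<and> g (i,a) = (j,b)} \<subseteq> {snd (h(j,b))}"
    proof
      fix a assume "a \<in> {a. 1 \<le> a \<and> g (i,a) = (j,b)}"
      then have "1 \<le> a" "g (i,a) = (j,b)" by auto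
      then have "h (j,b) = (i,a)" using G i by metis
      then show "a \<in> {snd (h(j,b))}" by simp
    qed
  qed simp
  then show "inRk k (pm g i j)" using BG i by (intro pm_inRk) auto
next
  fix i j assume i: "i < n" and j: "j < m"
  have "finite {a. 1 \<le> a \<and> h (i,a) = (j,b)}" for b
  proof (rule finite_subset[of _ "{snd (g(j,b))}"])
    show "{a. 1 \<le> a \<and> h (i,a) = (j,b)} \<subseteq> {snd (g(j,b))}"
    proof
      fix a assume "a \<in> {a. 1 \<le> a \<and> h (i,a) = (j,b)}"
      then have "1 \<le> a" "h (i,a) = (j,b)" by auto
      then have "g (j,b) = (i,a)" using H i by metis
      then show "a \<in> {snd (g(j,b))}" by simp
    qed
  qed simp
  then show "inRk k (pm h i j)" using BH i by (intro pm_inRk) auto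
next
  fix i j assume i: "i < m" and j: "j < m"
  show "(\<lambda>a b. \<Sum>l<n. mmul (pm g i l) (pm h l j) a b) = (if i = j then mone else mzero)"
  proof (intro ext)
    fix a b
    have "(\<Sum>l<n. mmul (pm g i l) (pm h l j) a b) = (\<Sum>l<n. if l = fst (g(i,a)) then (if 1 \<le> a \<and> 1 \<le> snd (g(i,a)) then pm h l j (snd (g(i,a))) b else 0) else 0)"
      by (rule sum.cong) (auto simp: pm_mmul)
    also have "\<dots> = (if 1 \<le> a then pm h (fst (g(i,a))) j (snd (g(i,a))) b else 0)"
      using G i by (auto simp: sum.delta')
    also have "\<dots> = (if i = j then mone else mzero) a b"
      using G i by (auto simp: pm_def mone_def mzero_def)
    finally show "(\<Sum>l<n. mmul (pm g i l) (pm h l j) a b) = (if i = j then mone else mzero) a b" .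
  qed
next
  fix i j assume i: "i < n" and j: "j < n"
  show "(\<lambda>a b. \<Sum>l<m. mmul (pm h i l) (pm g l j) a b) = (if i = j then mone else mzero)"
  proof (intro ext)
    fix a b
    have "(\<Sum>l<m. mmul (pm h i l) (pm g l j) a b) = (\<Sum>l<m. if l = fst (h(i,a)) then (if 1 \<le> a \<and> 1 \<le> snd (h(i,a)) then pm g l j (snd (h(i,a))) b else 0) else 0)"
      by (rule sum.cong) (auto simp: pm_mmul)
    also have "\<dots> = (if 1 \<le> a then pm g (fst (h(i,a))) j (snd (h(i,a))) b else 0)"
      using H i by (auto simp: sum.delta')
    also have "\<dots> = (if i = j then mone else mzero) a b"
      using H i by (auto simp: pm_def mone_def mzero_def)
    finally show "(\<Sum>l<m. mmul (pm h i l) (pm g l j) a b) = (if i = j then mone else mzero) a b" .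
  qed
qed

definition gg :: "nat \<Rightarrow> nat \<Rightarrow> nat \<Rightarrow> nat\<times>nat \<Rightarrow> nat\<times>nat" where
  "gg k m t x = (let i = fst x; a = snd x in
     if i \<noteq> 0 \<or> a \<le> 1 then (i,a)
     else if a - 2 < k*t then (m + (a-2), 1)
     else (let q = (a-2) div k; s = (a-2) mod k; r = q - t; u = r div (1+k*t); v = r mod (1+k*t) in
       (if v = 0 then 0 else m + v - 1, 2 + k*u + s)))"

definition hh :: "nat \<Rightarrow> nat \<Rightarrow> nat \<Rightarrow> nat\<times>nat \<Rightarrow> nat\<times>nat" where
  "hh k m t x = (let l = fst x; b = snd x in
     if (0 < l \<and> l < m) \<or> (b \<le> 1 \<and> l = 0) then (l,b)
     else if b \<le> 1 then (0, 2 + (l - m))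
     else (let u = (b-2) div k; s = (b-2) mod k; v = (if l = 0 then 0 else l - m + 1) in
       (0, 2 + k*(t + (1+k*t)*u + v) + s)))"

lemma g_main:
  assumes k: "0 < k" and m: "0 < m" and i: "i < m" and a: "1 \<le> a"
  shows "fst (gg k m t (i,a)) < m + k*t \<and> 1 \<le> snd (gg k m t (i,a)) \<and> hh k m t (gg k m t (i,a)) = (i,a)"
proof (cases "i \<noteq> 0 \<or> a \<le> 1")
  case True
  then show ?thesis using i a by (auto simp: gg_def hh_def Let_def)
next
  case False
  then have i0: "i = 0" and a2: "2 \<le> a" by auto
  show ?thesis
  proof (cases "a - 2 < k*t")
    case True
    then show ?thesis using i0 a2 m by (auto simp: gg_def hh_def Let_def)
  next
    case F: False
    define q where "q = (a-2) div k"
    define s where "s = (a-2) mod k"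
    define r where "r = q - t"
    define u where "u = r div (1+k*t)"
    define v where "v = r mod (1+k*t)"
    have g: "gg k m t (i,a) = (if v = 0 then 0 else m + v - 1, 2 + k*u + s)"
      using i0 a2 F by (simp add: gg_def Let_def q_def s_def r_def u_def v_def)
    have qt: "t \<le> q" using F k unfolding q_def
      by (metis div_le_mono le_less_linear nonzero_mult_div_cancel_left not_less_iff_gr_or_eq order.strict_trans2 mult.commute div_less_iff_less_mult)
    have vlt: "v < 1 + k*t" unfolding v_def by simp
    have sk: "s < k" using k unfolding s_def by simp
    have uu: "(k*u+s) div k = u" "(k*u+s) mod k = s" using sk k by auto
    have rr: "(1+k*t)*u + v = r" unfolding u_def v_def by (metis div_mult_mod_eq mult.commute)
    have aa: "2 + k*(t + (1+k*t)*u + v) + s = a"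
    proof -
      have "t + (1+k*t)*u + v = q" using rr qt unfolding r_def by simp
      then show ?thesis using a2 unfolding q_def s_def by simp
    qed
    show ?thesis
    proof (cases "v = 0")
      case True
      then show ?thesis using g i0 m uu aa by (simp add: hh_def Let_def)
    next
      case False
      have "m + v - 1 < m + k*t" using vlt False by simp
      moreover have "hh k m t (m + v - 1, 2 + k*u + s) = (0, a)"
      proof -
        have n1: "\<not> (m + v - 1 < m)" "m + v - 1 \<noteq> 0" "m + v - 1 - m + 1 = v" using False m by auto
        have "2 + k*u + s - 2 = k*u + s" by simp
        then show ?thesis using n1 uu aa by (simp add: hh_def Let_def del: One_nat_def)
      qed
      ultimately show ?thesis using g i0 False by simp
    qed
  qed
qed

lemma dm_gen: "(v::nat) < c \<Longrightarrow> (c*u+v) div c = u \<and> (c*u+v) mod c = v"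
  by simp

lemma h_main:
  assumes k: "0 < k" and m: "0 < m" and l: "l < m + k*t" and b: "1 \<le> b"
  shows "fst (hh k m t (l,b)) < m \<and> 1 \<le> snd (hh k m t (l,b)) \<and> gg k m t (hh k m t (l,b)) = (l,b)"
proof (cases "(0 < l \<and> l < m) \<or> (b \<le> 1 \<and> l = 0)")
  case True
  then show ?thesis using m b by (auto simp: gg_def hh_def Let_def)
next
  case F1: False
  show ?thesis
  proof (cases "b \<le> 1")
    case True
    have lm: "m \<le> l" "b = 1" using F1 b True by auto
    have h: "hh k m t (l,b) = (0, 2 + (l - m))" using F1 True lm by (simp add: hh_def Let_def)
    have "l - m < k*t" using l lm by simp
    then have "gg k m t (0, 2 + (l - m)) = (l, 1)" using lm by (simp add: gg_def Let_def)
    then show ?thesis using h m lm by simp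
  next
    case F2: False
    define u where "u = (b-2) div k"
    define s where "s = (b-2) mod k"
    define v where "v = (if l = 0 then 0 else l - m + 1)"
    have h: "hh k m t (l,b) = (0, 2 + k*(t + (1+k*t)*u + v) + s)"
      using F1 F2 by (simp add: hh_def Let_def u_def s_def v_def)
    have sk: "s < k" using k unfolding s_def by simp
    have vlt: "v < 1 + k*t" using l F1 unfolding v_def by auto
    have bb: "2 + k*u + s = b" using F2 unfolding u_def s_def by simp
    define A where "A = 2 + k*(t + (1+k*t)*u + v) + s"
    have A2: "A - 2 = k*(t + (1+k*t)*u + v) + s" unfolding A_def by simp
    have nlt: "\<not> (A - 2 < k*t)" unfolding A2 by (metis add_mult_distrib2 le_add1 le_add2 not_less order_trans)
    have q: "(A-2) div k = t + (1+k*t)*u + v" "(A-2) mod k = s" unfolding A2 using sk k by auto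
    have r: "(t + (1+k*t)*u + v) - t = (1+k*t)*u + v" by simp
    have uv: "((1+k*t)*u + v) div (1+k*t) = u" "((1+k*t)*u + v) mod (1+k*t) = v"
      using dm_gen[OF vlt] by auto
    have g: "gg k m t (0, A) = (if v = 0 then 0 else m + v - 1, 2 + k*u + s)"
      using nlt q uv r unfolding gg_def Let_def
      by (simp add: A_def del: One_nat_def)
    have "(if v = 0 then 0 else m + v - 1) = l"
      using F1 m unfolding v_def by auto
    then show ?thesis using h g bb m unfolding A_def by simp
  qed
qed

lemma g_blocky:
  assumes k: "0 < k"
  shows "blocky k (gg k m t) i"
  unfolding blocky_def
proof (intro allI impI)
  fix p :: nat assume p: "2 \<le> p"
  show "(\<forall>s<k. snd (gg k m t (i, 2+k*(p-2)+s)) = 1) \<or>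
     (\<exists>L Q. 2 \<le> Q \<and> (\<forall>s<k. gg k m t (i, 2+k*(p-2)+s) = (L, 2+k*(Q-2)+s)))"
  proof (cases "i \<noteq> 0")
    case True
    then have "\<forall>s<k. gg k m t (i, 2+k*(p-2)+s) = (i, 2+k*(p-2)+s)" by (simp add: gg_def)
    then show ?thesis using p by blast
  next
    case False
    then have i0: "i = 0" by simp
    show ?thesis
    proof (cases "p - 2 < t")
      case True
      have "\<forall>s<k. snd (gg k m t (i, 2+k*(p-2)+s)) = 1"
      proof (intro allI impI)
        fix s assume s: "s < k"
        have "k*(p-2)+s < k*(p-2) + k" using s by simp
        also have "\<dots> = k*(Suc (p-2))" by simp
        also have "\<dots> \<le> k*t" using True by (intro mult_le_mono2) simp
        finally have "k*(p-2)+s < k*t" .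
        then show "snd (gg k m t (i, 2+k*(p-2)+s)) = 1" using i0 by (simp add: gg_def Let_def)
      qed
      then show ?thesis by blast
    next
      case F: False
      define r where "r = (p-2) - t"
      define u where "u = r div (1+k*t)"
      define v where "v = r mod (1+k*t)"
      have "\<forall>s<k. gg k m t (i, 2+k*(p-2)+s) = (if v = 0 then 0 else m + v - 1, 2+k*((2+u)-2)+s)"
      proof (intro allI impI)
        fix s assume s: "s < k"
        have nlt: "\<not> (k*(p-2)+s < k*t)" using F
          by (metis add_lessD1 linorder_not_le mult_le_mono2 not_less)
        have q: "(k*(p-2)+s) div k = p-2" "(k*(p-2)+s) mod k = s" using s k by auto
        show "gg k m t (i, 2+k*(p-2)+s) = (if v = 0 then 0 else m + v - 1, 2+k*((2+u)-2)+s)"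
          using i0 nlt q unfolding gg_def Let_def r_def u_def v_def by (simp del: One_nat_def)
      qed
      then have "2 \<le> 2+u \<and> (\<forall>s<k. gg k m t (i, 2+k*(p-2)+s) = (if v = 0 then 0 else m + v - 1, 2+k*((2+u)-2)+s))"
        by (intro conjI) simp_all
      then have "\<exists>L Q. 2 \<le> Q \<and> (\<forall>s<k. gg k m t (i, 2+k*(p-2)+s) = (L, 2+k*(Q-2)+s))"
        by (intro exI)
      then show ?thesis by blast
    qed
  qed
qed

lemma h_blocky:
  assumes k: "0 < k"
  shows "blocky k (hh k m t) l"
  unfolding blocky_def
proof (intro allI impI)
  fix p :: nat assume p: "2 \<le> p"
  show "(\<forall>s<k. snd (hh k m t (l, 2+k*(p-2)+s)) = 1) \<or>
     (\<exists>L Q. 2 \<le> Q \<and> (\<forall>s<k. hh k m t (l, 2+k*(p-2)+s) = (L, 2+k*(Q-2)+s)))"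
  proof (cases "0 < l \<and> l < m")
    case True
    then have "\<forall>s<k. hh k m t (l, 2+k*(p-2)+s) = (l, 2+k*(p-2)+s)" by (simp add: hh_def)
    then show ?thesis using p by blast
  next
    case False
    define v where "v = (if l = 0 then 0 else l - m + 1)"
    have "\<forall>s<k. hh k m t (l, 2+k*(p-2)+s) = (0, 2+k*((2 + (t + (1+k*t)*(p-2) + v))-2)+s)"
    proof (intro allI impI)
      fix s assume s: "s < k"
      have q: "(k*(p-2)+s) div k = p-2" "(k*(p-2)+s) mod k = s" using s k by auto
      show "hh k m t (l, 2+k*(p-2)+s) = (0, 2+k*((2 + (t + (1+k*t)*(p-2) + v))-2)+s)"
        using False q unfolding hh_def Let_def v_def by (simp del: One_nat_def)
    qed
    then have "2 \<le> 2 + (t + (1+k*t)*(p-2) + v) \<and> (\<forall>s<k. hh k m t (l, 2+k*(p-2)+s) = (0, 2+k*((2 + (t + (1+k*t)*(p-2) + v))-2)+s))"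
      by (intro conjI) simp_all
    then have "\<exists>L Q. 2 \<le> Q \<and> (\<forall>s<k. hh k m t (l, 2+k*(p-2)+s) = (L, 2+k*(Q-2)+s))"
      by (intro exI)
    then show ?thesis by blast
  qed
qed

lemma free_iso_sym: "free_iso k m n \<Longrightarrow> free_iso k n m"
  unfolding free_iso_def by blast

lemma iso_add: "0 < k \<Longrightarrow> 0 < m \<Longrightarrow> free_iso k m (m + k*t)"
  by (rule perm_iso[where g = "gg k m t" and h = "hh k m t"])
     (use g_main h_main g_blocky h_blocky in auto)

lemma if_dir:
  assumes "0 < k" "0 < m" "0 < n" "m mod k = n mod k"
  shows "free_iso k m n"
proof -
  have *: "free_iso k a b" if "0 < a" "a \<le> b" "a mod k = b mod k" for a b
  proof -
    have "k dvd b - a" using that mod_eq_dvd_iff_nat[of a b k] by simp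
    then obtain t where "b - a = k*t" by blast
    then have "b = a + k*t" using that by simp
    then show ?thesis using iso_add assms(1) that(1) by simp
  qed
  show ?thesis
  proof (cases "m \<le> n")
    case True then show ?thesis using * assms by simp
  next
    case False then show ?thesis using * assms free_iso_sym by simp
  qed
qed

definition good :: "nat \<Rightarrow> imat \<Rightarrow> nat \<Rightarrow> bool" where
  "good k A N \<longleftrightarrow> (\<forall>p q. 2 \<le> p \<longrightarrow> p \<le> N+1 \<longrightarrow> N+1 < q \<longrightarrow> block_scalar k A p q \<and> block_scalar k A q p)
     \<and> (\<forall>l\<ge>2+k*N. A 1 l = 0)"

lemma good_ev:
  assumes k: "0 < k" and A: "inRk k A"
  shows "\<exists>N0. \<forall>N\<ge>N0. good k A N"
proof -
  let ?E = "{(m, n). 2 \<le> m \<and> 2 \<le> n \<and> \<not> block_scalar k A m n}"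
  have fE: "finite ?E" using A unfolding inRk_def by simp
  have "finite (fst ` ?E \<union> snd ` ?E)" using fE by simp
  then obtain P where P: "\<forall>x\<in>fst ` ?E \<union> snd ` ?E. x < P" using finite_nat_set_iff_bounded by blast
  have "finite {l. A 1 l \<noteq> 0}" using A unfolding inRk_def inR_def by simp
  then obtain P2 where P2: "\<forall>x\<in>{l. A 1 l \<noteq> 0}. x < P2" using finite_nat_set_iff_bounded by blast
  show ?thesis
  proof (intro exI[of _ "P + P2"] allI impI)
    fix N assume N: "P + P2 \<le> N"
    have "block_scalar k A p q \<and> block_scalar k A q p" if "2 \<le> p" "p \<le> N+1" "N+1 < q" for p q
    proof -
      have "(p,q) \<notin> ?E"
      proof
        assume "(p,q) \<in> ?E"
        then have "q \<in> snd ` ?E" by force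
        then have "q < P" using P by blast
        then show False using N that by linarith
      qed
      moreover have "(q,p) \<notin> ?E"
      proof
        assume "(q,p) \<in> ?E"
        then have "q \<in> fst ` ?E" by force
        then have "q < P" using P by blast
        then show False using N that by linarith
      qed
      ultimately show ?thesis using that by auto
    qed
    moreover have "A 1 l = 0" if "2 + k*N \<le> l" for l
    proof (rule ccontr)
      assume "A 1 l \<noteq> 0"
      then have "l < P2" using P2 by auto
      moreover have "N \<le> k*N" using k by simp
      ultimately show False using that N by linarith
    qed
    ultimately show "good k A N" unfolding good_def by blast
  qed
qed

lemma block_sum:
  fixes F :: "nat \<Rightarrow> int"
  shows "(\<Sum>a\<in>{b..<b+k*N}. F a) = (\<Sum>p<N. \<Sum>s<k. F (b+k*p+s))"
proof (induction N)
  case 0 then show ?case by simp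
next
  case (Suc N)
  have "(\<Sum>a\<in>{b..<b+k*Suc N}. F a) = (\<Sum>a\<in>{b..<b+k*N}. F a) + (\<Sum>a\<in>{b+k*N..<b+k*N+k}. F a)"
  proof -
    have e: "b+k*Suc N = b+k*N+k" by simp
    show ?thesis unfolding e by (rule sum.atLeastLessThan_concat[symmetric]) auto
  qed
  also have "(\<Sum>a\<in>{b+k*N..<b+k*N+k}. F a) = (\<Sum>s<k. F (b+k*N+s))"
  proof -
    have "{b+k*N..<b+k*N+k} = (\<lambda>s. s + (b+k*N)) ` {0..<k}" by (simp add: add.commute)
    then show ?thesis by (simp add: sum.reindex atLeast0LessThan add.commute)
  qed
  finally show ?case using Suc by simp
qed

lemma inner_dvd:
  assumes k: "0 < k" and gA: "good k A N" and gB: "good k B N" and p: "p < N"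
  shows "int k dvd (\<Sum>s<k. \<Sum>s'<k. A (2+k*p+s) (2+k*N+k*q+s') * B (2+k*N+k*q+s') (2+k*p+s))"
proof -
  have "block_scalar k A (p+2) (N+q+2)" "block_scalar k B (N+q+2) (p+2)"
    using gA gB p unfolding good_def by auto
  then obtain c d where
    c: "\<forall>a<k. \<forall>b<k. A (2 + k * (p+2 - 2) + a) (2 + k * (N+q+2 - 2) + b) = (if a = b then c else 0)" and
    d: "\<forall>a<k. \<forall>b<k. B (2 + k * (N+q+2 - 2) + a) (2 + k * (p+2 - 2) + b) = (if a = b then d else 0)"
    unfolding block_scalar_def by blast
  have e1: "k * (p+2-2) = k*p" "k*(N+q+2-2) = k*N+k*q" by (simp_all add: algebra_simps)
  have "(\<Sum>s<k. \<Sum>s'<k. A (2+k*p+s) (2+k*N+k*q+s') * B (2+k*N+k*q+s') (2+k*p+s))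
      = (\<Sum>s<k. \<Sum>s'<k. (if s = s' then c else 0) * (if s' = s then d else 0))"
    using c d unfolding e1 by (intro sum.cong refl) (simp add: add.assoc)
  also have "\<dots> = (\<Sum>s<k. \<Sum>s'<k. if s' = s then c * d else 0)"
    by (intro sum.cong refl) auto
  also have "\<dots> = (\<Sum>s<k. c * d)"
    by (simp add: sum.delta)
  also have "\<dots> = int k * (c*d)" by simp
  finally show ?thesis by simp
qed

lemma cross:
  assumes k: "0 < k" and gA: "good k A N" and gB: "good k B N" and NQ: "N \<le> Q"
  shows "int k dvd (\<Sum>a\<in>{1..<2+k*N}. \<Sum>l\<in>{2+k*N..<2+k*Q}. A a l * B l a)"
proof -
  define f where "f a = (\<Sum>l\<in>{2+k*N..<2+k*Q}. A a l * B l a)" for a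
  have s1: "(\<Sum>a\<in>{1..<2+k*N}. f a) = f 1 + (\<Sum>a\<in>{2..<2+k*N}. f a)"
    by (subst sum.atLeast_Suc_lessThan) (simp_all add: numeral_2_eq_2)
  have f1: "f 1 = 0" unfolding f_def using gA unfolding good_def by (intro sum.neutral) auto
  have eQ: "2+k*Q = (2+k*N) + k*(Q-N)" using NQ by (simp add: algebra_simps)
  have fa: "f a = (\<Sum>q<Q-N. \<Sum>s'<k. A a (2+k*N+k*q+s') * B (2+k*N+k*q+s') a)" for a
    unfolding f_def eQ by (subst block_sum) (simp add: add.assoc)
  have "(\<Sum>a\<in>{2..<2+k*N}. f a) = (\<Sum>p<N. \<Sum>s<k. f (2+k*p+s))"
    by (rule block_sum)
  also have "\<dots> = (\<Sum>p<N. \<Sum>q<Q-N. \<Sum>s<k. \<Sum>s'<k. A (2+k*p+s) (2+k*N+k*q+s') * B (2+k*N+k*q+s') (2+k*p+s))"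
    unfolding fa by (rule sum.cong[OF refl], rule sum.swap)
  finally have "(\<Sum>a\<in>{2..<2+k*N}. f a) = \<dots>" .
  moreover have "int k dvd (\<Sum>p<N. \<Sum>q<Q-N. \<Sum>s<k. \<Sum>s'<k. A (2+k*p+s) (2+k*N+k*q+s') * B (2+k*N+k*q+s') (2+k*p+s))"
    by (rule dvd_sum, rule dvd_sum) (use inner_dvd[OF k gA gB] in blast)
  ultimately show ?thesis using s1 f1 unfolding f_def by simp
qed

lemma mmul_bound:
  assumes "\<forall>l\<ge>U. A a l = 0"
  shows "mmul A B a c = (\<Sum>l\<in>{1..<U}. A a l * B l c)"
  unfolding mmul_def
proof (rule sum.mono_neutral_left)
  show "{l. 1 \<le> l \<and> A a l \<noteq> 0} \<subseteq> {1..<U}" using assms by (auto simp: not_less[symmetric])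
qed auto

lemma key:
  assumes k: "0 < k" and A: "inRk k A" and B: "inRk k B"
  shows "\<exists>N0. \<forall>N\<ge>N0. int k dvd ((\<Sum>a\<in>{1..<2+k*N}. mmul A B a a) - (\<Sum>a\<in>{1..<2+k*N}. mmul B A a a))"
proof -
  obtain N1 where N1: "\<forall>N\<ge>N1. good k A N" using good_ev[OF k A] by blast
  obtain N2 where N2: "\<forall>N\<ge>N2. good k B N" using good_ev[OF k B] by blast
  show ?thesis
  proof (intro exI[of _ "N1+N2"] allI impI)
    fix N assume N: "N1 + N2 \<le> N"
    have gA: "good k A N" and gB: "good k B N" using N N1 N2 by auto
    define M where "M = 2 + k*N"
    have fin: "finite (\<Union>a<M. {l. A a l \<noteq> 0} \<union> {l. B a l \<noteq> 0})"
      using A B unfolding inRk_def inR_def by auto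
    then obtain U where U: "\<forall>x\<in>(\<Union>a<M. {l. A a l \<noteq> 0} \<union> {l. B a l \<noteq> 0}). x < U"
      using finite_nat_set_iff_bounded by blast
    define Q where "Q = U + N"
    define T where "T = 2 + k*Q"
    have "Q \<le> k*Q" using k by simp
    then have UT: "U \<le> T" unfolding T_def Q_def by linarith
    have M1: "1 \<le> M" unfolding M_def by simp
    have MT: "M \<le> T" unfolding T_def M_def Q_def using k by simp
    have rowA: "\<forall>l\<ge>T. A a l = 0" if "a < M" for a
    proof (intro allI impI)
      fix l assume l: "T \<le> l"
      show "A a l = 0"
      proof (rule ccontr)
        assume "A a l \<noteq> 0"
        then have "l \<in> (\<Union>a<M. {l. A a l \<noteq> 0} \<union> {l. B a l \<noteq> 0})" using that by blast
        then have "l < U" using U by blast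
        then show False using l UT by linarith
      qed
    qed
    have rowB: "\<forall>l\<ge>T. B a l = 0" if "a < M" for a
    proof (intro allI impI)
      fix l assume l: "T \<le> l"
      show "B a l = 0"
      proof (rule ccontr)
        assume "B a l \<noteq> 0"
        then have "l \<in> (\<Union>a<M. {l. A a l \<noteq> 0} \<union> {l. B a l \<noteq> 0})" using that by blast
        then have "l < U" using U by blast
        then show False using l UT by linarith
      qed
    qed
    have eAB: "mmul A B a a = (\<Sum>l\<in>{1..<M}. A a l * B l a) + (\<Sum>l\<in>{M..<T}. A a l * B l a)" if "a < M" for a
    proof -
      have e: "(\<Sum>l\<in>{1..<M}. A a l * B l a) + (\<Sum>l\<in>{M..<T}. A a l * B l a) = (\<Sum>l\<in>{1..<T}. A a l * B l a)"
        by (rule sum.atLeastLessThan_concat) (use MT M1 in auto)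
      show ?thesis using mmul_bound[where U=T and A=A and a=a and B=B and c=a, OF rowA[OF that]] e by simp
    qed
    have eBA: "mmul B A a a = (\<Sum>l\<in>{1..<M}. B a l * A l a) + (\<Sum>l\<in>{M..<T}. B a l * A l a)" if "a < M" for a
    proof -
      have e: "(\<Sum>l\<in>{1..<M}. B a l * A l a) + (\<Sum>l\<in>{M..<T}. B a l * A l a) = (\<Sum>l\<in>{1..<T}. B a l * A l a)"
        by (rule sum.atLeastLessThan_concat) (use MT M1 in auto)
      show ?thesis using mmul_bound[where U=T and A=B and a=a and B=A and c=a, OF rowB[OF that]] e by simp
    qed
    have S1: "(\<Sum>a\<in>{1..<M}. mmul A B a a) = (\<Sum>a\<in>{1..<M}. \<Sum>l\<in>{1..<M}. A a l * B l a) + (\<Sum>a\<in>{1..<M}. \<Sum>l\<in>{M..<T}. A a l * B l a)"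
      using eAB by (simp add: sum.distrib)
    have S2: "(\<Sum>a\<in>{1..<M}. mmul B A a a) = (\<Sum>a\<in>{1..<M}. \<Sum>l\<in>{1..<M}. B a l * A l a) + (\<Sum>a\<in>{1..<M}. \<Sum>l\<in>{M..<T}. B a l * A l a)"
      using eBA by (simp add: sum.distrib)
    have sw: "(\<Sum>a\<in>{1..<M}. \<Sum>l\<in>{1..<M}. A a l * B l a) = (\<Sum>a\<in>{1..<M}. \<Sum>l\<in>{1..<M}. B a l * A l a)"
      by (subst sum.swap) (simp add: mult.commute)
    have NQ: "N \<le> Q" unfolding Q_def by simp
    have c1: "int k dvd (\<Sum>a\<in>{1..<M}. \<Sum>l\<in>{M..<T}. A a l * B l a)"
      using cross[OF k gA gB NQ] unfolding M_def T_def .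
    have c2: "int k dvd (\<Sum>a\<in>{1..<M}. \<Sum>l\<in>{M..<T}. B a l * A l a)"
      using cross[OF k gB gA NQ] unfolding M_def T_def .
    show "int k dvd ((\<Sum>a\<in>{1..<2+k*N}. mmul A B a a) - (\<Sum>a\<in>{1..<2+k*N}. mmul B A a a))"
      unfolding M_def[symmetric]
    proof -
      have "(\<Sum>a\<in>{1..<M}. mmul A B a a) - (\<Sum>a\<in>{1..<M}. mmul B A a a) =
        (\<Sum>a\<in>{1..<M}. \<Sum>l\<in>{M..<T}. A a l * B l a) - (\<Sum>a\<in>{1..<M}. \<Sum>l\<in>{M..<T}. B a l * A l a)"
        unfolding S1 S2 sw by simp
      then show "int k dvd (\<Sum>a\<in>{1..<M}. mmul A B a a) - (\<Sum>a\<in>{1..<M}. mmul B A a a)"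
        using c1 c2 by (simp add: dvd_diff)
    qed
  qed
qed

lemma only_if:
  assumes k: "0 < k" and iso: "free_iso k m n"
  shows "m mod k = n mod k"
proof -
  obtain X Y :: "nat \<Rightarrow> nat \<Rightarrow> imat" where
    X: "\<forall>i<m. \<forall>j<n. inRk k (X i j)" and Y: "\<forall>i<n. \<forall>j<m. inRk k (Y i j)" and
    XY: "\<forall>i<m. \<forall>j<m. (\<lambda>a b. \<Sum>l<n. mmul (X i l) (Y l j) a b) = (if i = j then mone else mzero)" and
    YX: "\<forall>i<n. \<forall>j<n. (\<lambda>a b. \<Sum>l<m. mmul (Y i l) (X l j) a b) = (if i = j then mone else mzero)"
    using iso unfolding free_iso_def by blast
  define P where "P i l N \<longleftrightarrow> int k dvd ((\<Sum>a\<in>{1..<2+k*N}. mmul (X i l) (Y l i) a a) - (\<Sum>a\<in>{1..<2+k*N}. mmul (Y l i) (X i l) a a))" for i l N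
  have ev: "\<forall>il\<in>{..<m}\<times>{..<n}. eventually (\<lambda>N. P (fst il) (snd il) N) sequentially"
  proof
    fix il assume "il \<in> {..<m}\<times>{..<n}"
    then have "inRk k (X (fst il) (snd il))" "inRk k (Y (snd il) (fst il))" using X Y by auto
    from key[OF k this] show "eventually (\<lambda>N. P (fst il) (snd il) N) sequentially"
      unfolding P_def eventually_sequentially by blast
  qed
  have "eventually (\<lambda>N. \<forall>il\<in>{..<m}\<times>{..<n}. P (fst il) (snd il) N) sequentially"
    by (rule eventually_ball_finite) (use ev in auto)
  then obtain N where N: "\<forall>il\<in>{..<m}\<times>{..<n}. P (fst il) (snd il) N"
    unfolding eventually_sequentially by blast
  define M where "M = 2 + k*N"
  have one: "(\<Sum>a\<in>{1..<M}. mone a a) = int (M - 1)"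
    by (simp add: mone_def)
  have s1: "(\<Sum>i<m. \<Sum>l<n. \<Sum>a\<in>{1..<M}. mmul (X i l) (Y l i) a a) = int m * int (M - 1)"
  proof -
    have "(\<Sum>i<m. \<Sum>l<n. \<Sum>a\<in>{1..<M}. mmul (X i l) (Y l i) a a) = (\<Sum>i<m. \<Sum>a\<in>{1..<M}. \<Sum>l<n. mmul (X i l) (Y l i) a a)"
      by (rule sum.cong[OF refl], rule sum.swap)
    also have "\<dots> = (\<Sum>i<m. \<Sum>a\<in>{1..<M}. mone a a)"
    proof (rule sum.cong[OF refl])
      fix i assume "i \<in> {..<m}"
      then have eq: "(\<lambda>a b. \<Sum>l<n. mmul (X i l) (Y l i) a b) = mone" using XY by auto
      have h: "(\<Sum>l<n. mmul (X i l) (Y l i) a b) = mone a b" for a b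
        using fun_cong[OF fun_cong[OF eq, of a], of b] by simp
      show "(\<Sum>a\<in>{1..<M}. \<Sum>l<n. mmul (X i l) (Y l i) a a) = (\<Sum>a\<in>{1..<M}. mone a a)"
        by (simp only: h)
    qed
    finally show ?thesis using one by simp
  qed
  have s2: "(\<Sum>i<m. \<Sum>l<n. \<Sum>a\<in>{1..<M}. mmul (Y l i) (X i l) a a) = int n * int (M - 1)"
  proof -
    have "(\<Sum>i<m. \<Sum>l<n. \<Sum>a\<in>{1..<M}. mmul (Y l i) (X i l) a a) = (\<Sum>l<n. \<Sum>i<m. \<Sum>a\<in>{1..<M}. mmul (Y l i) (X i l) a a)"
      by (rule sum.swap)
    also have "\<dots> = (\<Sum>l<n. \<Sum>a\<in>{1..<M}. \<Sum>i<m. mmul (Y l i) (X i l) a a)"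
      by (rule sum.cong[OF refl], rule sum.swap)
    also have "\<dots> = (\<Sum>l<n. \<Sum>a\<in>{1..<M}. mone a a)"
    proof (rule sum.cong[OF refl])
      fix l assume "l \<in> {..<n}"
      then have eq: "(\<lambda>a b. \<Sum>i<m. mmul (Y l i) (X i l) a b) = mone" using YX by auto
      have h: "(\<Sum>i<m. mmul (Y l i) (X i l) a b) = mone a b" for a b
        using fun_cong[OF fun_cong[OF eq, of a], of b] by simp
      show "(\<Sum>a\<in>{1..<M}. \<Sum>i<m. mmul (Y l i) (X i l) a a) = (\<Sum>a\<in>{1..<M}. mone a a)"
        by (simp only: h)
    qed
    finally show ?thesis using one by simp
  qed
  have "int k dvd (\<Sum>i<m. \<Sum>l<n. (\<Sum>a\<in>{1..<M}. mmul (X i l) (Y l i) a a) - (\<Sum>a\<in>{1..<M}. mmul (Y l i) (X i l) a a))"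
  proof (rule dvd_sum)
    fix i assume i: "i \<in> {..<m}"
    show "int k dvd (\<Sum>l<n. (\<Sum>a\<in>{1..<M}. mmul (X i l) (Y l i) a a) - (\<Sum>a\<in>{1..<M}. mmul (Y l i) (X i l) a a))"
    proof (rule dvd_sum)
      fix l assume l: "l \<in> {..<n}"
      have "(i,l) \<in> {..<m}\<times>{..<n}" using i l by simp
      then have "P i l N" using N by fastforce
      then show "int k dvd (\<Sum>a\<in>{1..<M}. mmul (X i l) (Y l i) a a) - (\<Sum>a\<in>{1..<M}. mmul (Y l i) (X i l) a a)"
        unfolding P_def M_def .
    qed
  qed
  then have "int k dvd (int m * int (M - 1) - int n * int (M - 1))"
    using s1 s2 by (simp add: sum_subtractf)
  moreover have "int m * int (M - 1) - int n * int (M - 1) = (int m - int n) + int k * (int N * (int m - int n))"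
    unfolding M_def by (simp add: algebra_simps)
  ultimately have d: "int k dvd (int m - int n) + int k * (int N * (int m - int n))" by simp
  have "int k dvd int k * (int N * (int m - int n))" by simp
  then have "int k dvd (int m - int n)" using d dvd_add_left_iff by blast
  then have "int m mod int k = int n mod int k" by (simp add: mod_eq_dvd_iff)
  then have "int (m mod k) = int (n mod k)" by (simp add: of_nat_mod)
  then show ?thesis by simp
qed

theorem theorem3:
  fixes k m n :: nat
  assumes "0 < k" and "0 < m" and "0 < n"
  shows "free_iso k m n \<longleftrightarrow> m mod k = n mod k"
  using only_if[OF assms(1)] if_dir[OF assms] by blast

end
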